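(* Let $P \subset \mathbb{R}^2$ be a finite point set satisfying the standing condition, $\varepsilon \in (0,1)$, and let $S$ and the directed graph $G$ be as defined in the context. Then: (i) if $C$ is a directed cycle of $G$, then the set $Q$ of vertices of $C$ is an $\varepsilon$-regret set of $P$; (ii) if $Q$ is a locally minimal $\varepsilon$-regret set of $P$, then there exists a directed cycle $C$ of $G$ whose vertex set is $Q$.
   Context: For finite $Q \subset \mathbb{R}^2$ and unit $x$, $\omega(x,Q)=\max_{p\in Q}\langle p,x\rangle$. Standing condition: $\omega(x,P)>0$ for all $x\in\mathbb{S}^1$. Regret ratio $l_x(Q) = 1-\omega(x,Q)/\omega(x,P)$, maximum regret ratio $l(Q)=\max_{x\in\mathbb{S}^1} l_x(Q)$; $Q\subseteq P$ is an $\varepsilon$-regret set if $l(Q)\le\varepsilon$. $Q$ is a locally minimal $\varepsilon$-regret set if it is an $\varepsilon$-regret set and $Q\setminus\{q\}$ is not an $\varepsilon$-regret set for any $q \in Q$. The Voronoi cell of $p$ is $R(p)=\{x\neq 0 : \langle p,x\rangle\ge\omega(x,P)\}$; the extreme points $X=\{t_1,\dots,t_m\}$ are the points with $R(p)\neq\varnothing$ (the convex hull vertices), indexed counterclockwise by polar angle, cyclically. For each $i$, $x^*_i\in\mathbb{S}^1$ is the unit vector with $\langle t_i,x\rangle=\langle t_{i+1},x\rangle$ and $\langle t_i,x\rangle>0$. Candidate set: $S = X\cup\{p\in P\setminus X : \exists i,\ \langle p,x^*_i\rangle\ge(1-\varepsilon)\langle t_i,x^*_i\rangle\}$, indexed $s_1,\dots,s_{|S|}$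 counterclockwise by polar angle. For points $a,b$, $X[a,b]$ denotes the extreme points whose polar angles lie in the counterclockwise angular range from the angle of $a$ to the angle of $b$ (inclusive, wrapping through $2\pi$ if needed). The directed graph $G$ has vertex set $S$, and for $i\neq j$ there is an edge $s_i\to s_j$ iff the counterclockwise angle from $s_i$ to $s_j$ is less than $\pi$ and $l_{ij}\le\varepsilon$, where $l_{ij}=\max_{t\in X[s_i,s_j]}\bigl(1-\langle s_i,x^*\rangle/\langle t,x^*\rangle\bigr)$ (taken as $0$ if $X[s_i,s_j]$ is empty) and $x^*\in\mathbb{S}^1$ is the unit vector with $\langle s_i,x^*\rangle=\langle s_j,x^*\rangle$ and $\langle s_i,x^*\rangle\ge 0$. *)

theory Defs
  imports "HOL-Analysis.Analysis"
begin

text \<open>Points of the plane are represented as complex numbers; the inner product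
  is the real inner product on complex numbers (p \<bullet> x = Re p * Re x + Im p * Im x),
  and polar angles are given by Arg.\<close>

definition omega :: "complex \<Rightarrow> complex set \<Rightarrow> real" where
  "omega x Q = Max ((\<lambda>p. p \<bullet> x) ` Q)"

definition regret_ratio :: "complex \<Rightarrow> complex set \<Rightarrow> complex set \<Rightarrow> real" where
  "regret_ratio x Q P = 1 - omega x Q / omega x P"

definition eps_regret_set :: "complex set \<Rightarrow> real \<Rightarrow> complex set \<Rightarrow> bool" where
  "eps_regret_set P eps Q \<longleftrightarrow> Q \<subseteq> P \<and> Q \<noteq> {} \<and>
     (\<forall>x. norm x = 1 \<longrightarrow> regret_ratio x Q P \<le> eps)"

definition loc_min_eps_regret_set :: "complex set \<Rightarrow> real \<Rightarrow> complex set \<Rightarrow> bool" where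
  "loc_min_eps_regret_set P eps Q \<longleftrightarrow> eps_regret_set P eps Q \<and>
     (\<forall>q\<in>Q. \<not> eps_regret_set P eps (Q - {q}))"

definition voronoi_cell :: "complex set \<Rightarrow> complex \<Rightarrow> complex set" where
  "voronoi_cell P p = {x. x \<noteq> 0 \<and> p \<bullet> x \<ge> omega x P}"

definition extreme_pts :: "complex set \<Rightarrow> complex set" where
  "extreme_pts P = {p \<in> P. voronoi_cell P p \<noteq> {}}"

definition ccw_angle :: "complex \<Rightarrow> complex \<Rightarrow> real" where
  "ccw_angle a b = (if Arg b - Arg a < 0 then Arg b - Arg a + 2 * pi else Arg b - Arg a)"

text \<open>t' is the successor t_{i+1} of t = t_i in the counterclockwise order of X.\<close>
definition consecutive :: "complex set \<Rightarrow> complex \<Rightarrow> complex \<Rightarrow> bool" where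
  "consecutive P t t' \<longleftrightarrow> t \<in> extreme_pts P \<and> t' \<in> extreme_pts P \<and> t \<noteq> t' \<and>
     (\<forall>t''\<in>extreme_pts P. t'' \<noteq> t \<longrightarrow> ccw_angle t t' \<le> ccw_angle t t'')"

definition xstar_ext :: "complex \<Rightarrow> complex \<Rightarrow> complex" where
  "xstar_ext t t' = (THE x. norm x = 1 \<and> t \<bullet> x = t' \<bullet> x \<and> t \<bullet> x > 0)"

definition candidates :: "complex set \<Rightarrow> real \<Rightarrow> complex set" where
  "candidates P eps = extreme_pts P \<union>
     {p \<in> P - extreme_pts P. \<exists>t t'. consecutive P t t' \<and>
        p \<bullet> xstar_ext t t' \<ge> (1 - eps) * (t \<bullet> xstar_ext t t')}"

definition xrange :: "complex set \<Rightarrow> complex \<Rightarrow> complex \<Rightarrow> complex set" where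
  "xrange P a b = {t \<in> extreme_pts P. ccw_angle a t \<le> ccw_angle a b}"

definition xstar_pair_prop :: "complex \<Rightarrow> complex \<Rightarrow> complex \<Rightarrow> bool" where
  "xstar_pair_prop a b x \<longleftrightarrow> norm x = 1 \<and> a \<bullet> x = b \<bullet> x \<and> a \<bullet> x \<ge> 0"

definition lij :: "complex set \<Rightarrow> complex \<Rightarrow> complex \<Rightarrow> real" where
  "lij P a b = (let x = (THE x. xstar_pair_prop a b x); T = xrange P a b in
     if T = {} then 0 else Max ((\<lambda>t. 1 - (a \<bullet> x) / (t \<bullet> x)) ` T))"

text \<open>Edge relation of G (an edge requires the vector x* to be well defined, i.e. unique).\<close>
definition G_edge :: "complex set \<Rightarrow> real \<Rightarrow> complex \<Rightarrow> complex \<Rightarrow> bool" where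
  "G_edge P eps a b \<longleftrightarrow> a \<in> candidates P eps \<and> b \<in> candidates P eps \<and> a \<noteq> b \<and>
     ccw_angle a b < pi \<and> (\<exists>!x. xstar_pair_prop a b x) \<and> lij P a b \<le> eps"

definition dcycle :: "('a \<Rightarrow> 'a \<Rightarrow> bool) \<Rightarrow> 'a list \<Rightarrow> bool" where
  "dcycle E vs \<longleftrightarrow> length vs \<ge> 2 \<and> distinct vs \<and>
     (\<forall>i < length vs. E (vs ! i) (vs ! ((i + 1) mod length vs)))"

end

theory Submission
  imports Defs
begin


definition cross :: "complex \<Rightarrow> complex \<Rightarrow> real" where
  "cross a b = Re a * Im b - Im a * Re b"

lemma Re_polar: "Re a = cmod a * cos (Arg a)" and Im_polar: "Im a = cmod a * sin (Arg a)"
  by (cases "a = 0"; simp add: cos_Arg sin_Arg)+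

lemma ccw_range: "0 \<le> ccw_angle a b" "ccw_angle a b < 2 * pi"
  using Arg_bounded[of a] Arg_bounded[of b] unfolding ccw_angle_def by auto

lemma ccw_zero_iff: "ccw_angle a b = 0 \<longleftrightarrow> Arg a = Arg b"
  using Arg_bounded[of a] Arg_bounded[of b] unfolding ccw_angle_def by auto

lemma ccw_split: "ccw_angle a b \<le> ccw_angle a c \<Longrightarrow> ccw_angle b c = ccw_angle a c - ccw_angle a b"
  using Arg_bounded[of a] Arg_bounded[of b] Arg_bounded[of c] unfolding ccw_angle_def
  by (auto split: if_splits)

lemma ccw_sum: "ccw_angle a q + ccw_angle q b = ccw_angle a b \<or>
   ccw_angle a q + ccw_angle q b = ccw_angle a b + 2 * pi"
  using Arg_bounded[of a] Arg_bounded[of b] Arg_bounded[of q] unfolding ccw_angle_def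
  by (auto split: if_splits)

lemma cross_sin: "cross a b = cmod a * cmod b * sin (ccw_angle a b)"
proof -
  have "sin (ccw_angle a b) = sin (Arg b - Arg a)"
    unfolding ccw_angle_def by (simp add: sin_periodic)
  then show ?thesis
  proof -
    have "cross a b = (cmod a * cos (Arg a)) * (cmod b * sin (Arg b)) - (cmod a * sin (Arg a)) * (cmod b * cos (Arg b))"
      unfolding cross_def using Re_polar[of a] Im_polar[of a] Re_polar[of b] Im_polar[of b] by simp
    also have "\<dots> = cmod a * cmod b * sin (Arg b - Arg a)" by (simp add: sin_diff algebra_simps)
    finally show ?thesis using \<open>sin (ccw_angle a b) = sin (Arg b - Arg a)\<close> by simp
  qed
qed

lemma inner_rot: "(\<i> * a) \<bullet> b = cross a b"
  unfolding inner_complex_def cross_def by simp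

lemma inner_rot': "b \<bullet> (\<i> * a) = cross a b"
  using inner_rot by (simp add: inner_commute)

lemma cross_self[simp]: "cross a a = 0" unfolding cross_def by simp

lemma cramer: "cross a b *\<^sub>R t = cross t b *\<^sub>R a + cross a t *\<^sub>R b"
  unfolding cross_def by (simp add: complex_eq_iff scaleR_conv_of_real algebra_simps)

lemma cross_pos_iff:
  "cross a b > 0 \<longleftrightarrow> a \<noteq> 0 \<and> b \<noteq> 0 \<and> 0 < ccw_angle a b \<and> ccw_angle a b < pi"
proof
  assume h: "cross a b > 0"
  have "cmod a * cmod b \<ge> 0" by simp
  then have s: "sin (ccw_angle a b) > 0" and "a \<noteq> 0" "b \<noteq> 0"
    using h cross_sin[of a b] \<open>cmod a * cmod b \<ge> 0\<close> by (auto simp: zero_less_mult_iff)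
  moreover have "ccw_angle a b \<noteq> 0" using s by auto
  moreover have "ccw_angle a b < pi"
    using s sin_le_zero[of "ccw_angle a b"] ccw_range[of a b] by force
  ultimately show "a \<noteq> 0 \<and> b \<noteq> 0 \<and> 0 < ccw_angle a b \<and> ccw_angle a b < pi"
    using ccw_range[of a b] by auto
next
  assume "a \<noteq> 0 \<and> b \<noteq> 0 \<and> 0 < ccw_angle a b \<and> ccw_angle a b < pi"
  then show "cross a b > 0" using cross_sin[of a b] sin_gt_zero[of "ccw_angle a b"] by simp
qed

lemma cross_nonneg: "ccw_angle a b \<le> pi \<Longrightarrow> cross a b \<ge> 0"
  using cross_sin[of a b] sin_ge_zero[of "ccw_angle a b"] ccw_range[of a b] by simp

lemma cross_nonpos: "pi \<le> ccw_angle a b \<or> ccw_angle a b = 0 \<Longrightarrow> cross a b \<le> 0"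
  using cross_sin[of a b] sin_le_zero[of "ccw_angle a b"] ccw_range[of a b]
  by (auto simp: mult_nonneg_nonpos)

lemma same_Arg: assumes "a \<noteq> 0" "Arg a = Arg b" shows "b = (cmod b / cmod a) *\<^sub>R a"
proof -
  have na: "cmod a > 0" using assms by simp
  have "Re b = (cmod b / cmod a) * Re a"
    using na assms(2) Re_polar[of a] Re_polar[of b] by simp
  moreover have "Im b = (cmod b / cmod a) * Im a"
    using na assms(2) Im_polar[of a] Im_polar[of b] by simp
  ultimately show ?thesis by (simp add: complex_eq_iff)
qed

lemma cone:
  assumes "cross a b > 0" "ccw_angle a t \<le> ccw_angle a b"
  shows "cross a t \<ge> 0" "cross t b \<ge> 0"
  using assms cross_pos_iff[of a b] cross_nonneg[of a t] cross_nonneg[of t b] ccw_split[OF assms(2)]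
    ccw_range[of a t]
  by auto



lemma perp2:
  assumes "d \<bullet> x = 0" "d \<bullet> y = 0" "d \<noteq> 0" shows "cross x y = 0"
proof -
  have e1: "Re d * Re x + Im d * Im x = 0" "Re d * Re y + Im d * Im y = 0"
    using assms(1,2) by (simp_all add: inner_complex_def)
  have "Re d * cross x y = 0"
    unfolding cross_def using e1 by algebra
  moreover have "Im d * cross x y = 0"
    unfolding cross_def using e1 by algebra
  ultimately show ?thesis using assms(3) by (auto simp: complex_eq_iff)
qed

lemma unit_sq: "norm x = 1 \<Longrightarrow> Re x ^ 2 + Im x ^ 2 = 1"
  by (metis cmod_power2 one_power2)

lemma cross_diff_left: "cross (a - b) c = cross a c - cross b c"
  unfolding cross_def by (simp add: algebra_simps)
lemma cross_antisym: "cross b a = - cross a b"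
  unfolding cross_def by (simp add: algebra_simps)

lemma xstar_unique:
  assumes c: "cross a b \<noteq> 0" and x: "xstar_pair_prop a b x" and y: "xstar_pair_prop a b y"
  shows "x = y"
proof -
  have ab: "a - b \<noteq> 0" using c by auto
  have dx: "(a - b) \<bullet> x = 0" "(a - b) \<bullet> y = 0"
    using x y unfolding xstar_pair_prop_def by (auto simp: inner_diff_left)
  have cxy: "cross x y = 0" using perp2[OF dx ab] .
  have ux: "Re x ^ 2 + Im x ^ 2 = 1" and uy: "Re y ^ 2 + Im y ^ 2 = 1"
    using x y unfolding xstar_pair_prop_def by (auto intro: unit_sq)
  have "(x \<bullet> y) ^ 2 + (cross x y) ^ 2 = (Re x ^ 2 + Im x ^ 2) * (Re y ^ 2 + Im y ^ 2)"
    unfolding inner_complex_def cross_def by algebra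
  then have "(x \<bullet> y) ^ 2 = 1" using ux uy cxy by simp
  then have "x \<bullet> y = 1 \<or> x \<bullet> y = -1" by (simp add: power2_eq_1_iff)
  then show ?thesis
  proof
    assume "x \<bullet> y = 1"
    then have "(Re x - Re y) ^ 2 + (Im x - Im y) ^ 2 = 0"
      using ux uy unfolding inner_complex_def by (simp add: power2_diff algebra_simps)
    then show ?thesis by (simp add: complex_eq_iff sum_power2_eq_zero_iff)
  next
    assume "x \<bullet> y = -1"
    then have "(Re x + Re y) ^ 2 + (Im x + Im y) ^ 2 = 0"
      using ux uy unfolding inner_complex_def by (simp add: power2_sum algebra_simps)
    then have yx: "y = - x" by (simp add: complex_eq_iff sum_power2_eq_zero_iff)
    have "a \<bullet> x = 0" using x y yx unfolding xstar_pair_prop_def by simp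
    moreover have "b \<bullet> x = 0" using x calculation unfolding xstar_pair_prop_def by simp
    moreover have "x \<noteq> 0" using x unfolding xstar_pair_prop_def by auto
    ultimately have "cross a b = 0" using perp2[of x a b] by (simp add: inner_commute)
    then show ?thesis using c by simp
  qed
qed

definition xs :: "complex \<Rightarrow> complex \<Rightarrow> complex" where
  "xs a b = (sgn (cross a b) / norm (\<i> * (a - b))) *\<^sub>R (\<i> * (a - b))"

lemma xs_props:
  assumes c: "cross a b \<noteq> 0"
  shows "xstar_pair_prop a b (xs a b)" "a \<bullet> xs a b > 0"
proof -
  have w: "\<i> * (a - b) \<noteq> 0" using c by auto
  have wa: "a \<bullet> (\<i> * (a - b)) = cross a b"
    using inner_rot'[of a "a - b"] by (simp add: cross_diff_left cross_antisym[of b a])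
  have wb: "b \<bullet> (\<i> * (a - b)) = cross a b"
    using inner_rot'[of b "a - b"] by (simp add: cross_diff_left)
  have sc: "sgn (cross a b) * cross a b = \<bar>cross a b\<bar>" by (simp add: sgn_if)
  have pos: "a \<bullet> xs a b = \<bar>cross a b\<bar> / norm (\<i> * (a - b))"
    unfolding xs_def using wa sc by simp
  then show "a \<bullet> xs a b > 0" using c w by simp
  have "norm (xs a b) = 1" unfolding xs_def using c w
    by (simp add: abs_sgn_eq)
  moreover have "a \<bullet> xs a b = b \<bullet> xs a b" unfolding xs_def using wa wb by simp
  ultimately show "xstar_pair_prop a b (xs a b)"
    unfolding xstar_pair_prop_def using \<open>a \<bullet> xs a b > 0\<close> by simp
qed

lemma xs_the:
  assumes c: "cross a b \<noteq> 0"
  shows "(\<exists>!x. xstar_pair_prop a b x)" "(THE x. xstar_pair_prop a b x) = xs a b"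
    "xstar_ext a b = xs a b"
proof -
  show "\<exists>!x. xstar_pair_prop a b x" using xs_props[OF c] xstar_unique[OF c] by blast
  then show "(THE x. xstar_pair_prop a b x) = xs a b" using xs_props[OF c] by (simp add: the1_equality)
  have "\<exists>!x. norm x = 1 \<and> a \<bullet> x = b \<bullet> x \<and> a \<bullet> x > 0"
    using xs_props[OF c] xstar_unique[OF c] unfolding xstar_pair_prop_def
    by (smt (verit, ccfv_threshold))
  then show "xstar_ext a b = xs a b" unfolding xstar_ext_def using xs_props[OF c]
    unfolding xstar_pair_prop_def by (simp add: the1_equality)
qed

lemma not_unique_if_cross0:
  assumes "cross a b = 0" "a \<noteq> b"
  shows "\<not> (\<exists>!x. xstar_pair_prop a b x)"
proof -
  define w where "w = \<i> * (a - b)"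
  have w: "w \<noteq> 0" using assms unfolding w_def by auto
  define u where "u = (1 / norm w) *\<^sub>R w"
  have nu: "norm u = 1" "norm (-u) = 1" using w unfolding u_def by simp_all
  have wa: "a \<bullet> w = 0" "b \<bullet> w = 0"
    unfolding w_def using inner_rot'[of a "a - b"] inner_rot'[of b "a - b"] assms(1)
    by (simp_all add: cross_diff_left cross_antisym[of b a])
  have "xstar_pair_prop a b u" "xstar_pair_prop a b (-u)"
    unfolding xstar_pair_prop_def u_def using nu wa unfolding u_def by auto
  moreover have "u \<noteq> -u" using nu by auto
  ultimately show ?thesis by blast
qed



lemma omega_ge: "finite Q \<Longrightarrow> p \<in> Q \<Longrightarrow> p \<bullet> x \<le> omega x Q"
  unfolding omega_def by (rule Max_ge) auto

lemma omega_in: "finite Q \<Longrightarrow> Q \<noteq> {} \<Longrightarrow> \<exists>p\<in>Q. omega x Q = p \<bullet> x"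
proof -
  assume "finite Q" "Q \<noteq> {}"
  then have "Max ((\<lambda>p. p \<bullet> x) ` Q) \<in> (\<lambda>p. p \<bullet> x) ` Q" by (intro Max_in) auto
  then show ?thesis unfolding omega_def by auto
qed

lemma omega_le: "finite Q \<Longrightarrow> Q \<noteq> {} \<Longrightarrow> (\<And>p. p \<in> Q \<Longrightarrow> p \<bullet> x \<le> c) \<Longrightarrow> omega x Q \<le> c"
  using omega_in by metis

lemma omega_scale:
  assumes "finite Q" "Q \<noteq> {}" "c \<ge> 0"
  shows "omega (c *\<^sub>R x) Q = c * omega x Q"
proof (rule antisym)
  show "omega (c *\<^sub>R x) Q \<le> c * omega x Q"
    using assms by (intro omega_le) (auto intro!: mult_left_mono omega_ge)
  obtain p where "p \<in> Q" "omega x Q = p \<bullet> x" using omega_in assms by blast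
  then show "c * omega x Q \<le> omega (c *\<^sub>R x) Q"
    using omega_ge[OF assms(1) \<open>p \<in> Q\<close>, of "c *\<^sub>R x"] by simp
qed

lemma regret_le_iff:
  "omega x P > 0 \<Longrightarrow> regret_ratio x Q P \<le> e \<longleftrightarrow> (1 - e) * omega x P \<le> omega x Q"
  unfolding regret_ratio_def by (simp add: field_simps)

locale setting =
  fixes P :: "complex set" and eps :: real
  assumes finP: "finite P" and neP: "P \<noteq> {}"
    and posP: "\<forall>x. norm x = 1 \<longrightarrow> omega x P > 0"
    and e0: "0 < eps" and e1: "eps < 1"
begin

lemma omega_pos: assumes "x \<noteq> 0" shows "omega x P > 0"
proof -
  have "x = norm x *\<^sub>R sgn x" using assms by (simp add: sgn_div_norm)
  then have "omega x P = norm x * omega (sgn x) P"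
    using omega_scale[OF finP neP, of "norm x" "sgn x"] by simp
  moreover have "omega (sgn x) P > 0" using posP assms by (simp add: norm_sgn)
  ultimately show ?thesis using assms by simp
qed

lemma ext_props:
  assumes "t \<in> extreme_pts P" shows "t \<in> P" "t \<noteq> 0"
proof -
  show "t \<in> P" using assms unfolding extreme_pts_def by auto
  obtain y where "y \<noteq> 0" "t \<bullet> y \<ge> omega y P"
    using assms unfolding extreme_pts_def voronoi_cell_def by auto
  then show "t \<noteq> 0" using omega_pos[of y] by auto
qed

lemma finE: "finite (extreme_pts P)"
  using finP unfolding extreme_pts_def by auto

lemma maximizer_ext: assumes "x \<noteq> 0" shows "\<exists>t\<in>extreme_pts P. t \<bullet> x = omega x P"
proof -
  obtain t where t: "t \<in> P" "omega x P = t \<bullet> x" using omega_in[OF finP neP] by blast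
  then have "x \<in> voronoi_cell P t" using assms unfolding voronoi_cell_def by auto
  then show ?thesis using t unfolding extreme_pts_def by auto
qed

lemma dominated_not_ext:
  assumes "p \<in> P" "0 \<le> c" "c < 1" shows "c *\<^sub>R p \<notin> extreme_pts P"
proof
  assume "c *\<^sub>R p \<in> extreme_pts P"
  then obtain y where y: "y \<noteq> 0" "c * (p \<bullet> y) \<ge> omega y P"
    unfolding extreme_pts_def voronoi_cell_def by auto
  have w: "omega y P > 0" using omega_pos[OF y(1)] .
  have "p \<bullet> y \<le> omega y P" using omega_ge[OF finP assms(1)] .
  then have "c * (p \<bullet> y) \<ge> p \<bullet> y" using y by linarith
  then have "(1 - c) * (p \<bullet> y) \<le> 0" by (simp add: algebra_simps)
  then have "p \<bullet> y \<le> 0" using assms(3) by (simp add: mult_le_0_iff)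
  then have "c * (p \<bullet> y) \<le> 0" using assms(2) by (simp add: mult_nonneg_nonpos)
  then show False using y w by linarith
qed

lemma ext_Arg_inj:
  assumes "t1 \<in> extreme_pts P" "t2 \<in> extreme_pts P" "Arg t1 = Arg t2" shows "t1 = t2"
proof -
  have n: "t1 \<noteq> 0" "t2 \<noteq> 0" using ext_props assms by auto
  define k where "k = cmod t2 / cmod t1"
  have k: "t2 = k *\<^sub>R t1" "k > 0" using same_Arg[OF n(1) assms(3)] n unfolding k_def by auto
  consider "k < 1" | "k = 1" | "k > 1" by linarith
  then show ?thesis
  proof cases
    case 1 then show ?thesis using dominated_not_ext[of t1 k] assms ext_props k by auto
  next
    case 2 then show ?thesis using k by simp
  next
    case 3
    have "t1 = (1/k) *\<^sub>R t2" using k by simp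
    then show ?thesis using dominated_not_ext[of t2 "1/k"] assms ext_props k 3 by auto
  qed
qed

lemma consec_cross: assumes "consecutive P t1 t2" shows "cross t1 t2 > 0"
proof -
  have e: "t1 \<in> extreme_pts P" "t2 \<in> extreme_pts P" "t1 \<noteq> t2"
    and m: "\<And>t. t \<in> extreme_pts P \<Longrightarrow> t \<noteq> t1 \<Longrightarrow> ccw_angle t1 t2 \<le> ccw_angle t1 t"
    using assms unfolding consecutive_def by auto
  have n: "t1 \<noteq> 0" "t2 \<noteq> 0" using e ext_props by auto
  have "Arg t1 \<noteq> Arg t2" using ext_Arg_inj e by blast
  then have pos: "ccw_angle t1 t2 > 0" using ccw_zero_iff ccw_range by (metis order_le_less)
  have "ccw_angle t1 t2 < pi"
  proof (rule ccontr)
    assume "\<not> ccw_angle t1 t2 < pi"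
    have y: "\<i> * t1 \<noteq> 0" using n by simp
    obtain s where s: "s \<in> extreme_pts P" "s \<bullet> (\<i> * t1) = omega (\<i> * t1) P"
      using maximizer_ext[OF y] by blast
    have "cross t1 s \<le> 0"
    proof (cases "s = t1")
      case True then show ?thesis by simp
    next
      case False then show ?thesis using m[OF s(1)] \<open>\<not> ccw_angle t1 t2 < pi\<close>
        by (intro cross_nonpos) auto
    qed
    then show False using s omega_pos[OF y] inner_rot'[of s t1] by simp
  qed
  then show ?thesis using cross_pos_iff n pos by simp
qed

lemma ext_cover: "\<exists>t1 t2. consecutive P t1 t2 \<and> ccw_angle t1 r \<le> ccw_angle t1 t2"
proof -
  define E where "E = extreme_pts P"
  have fE: "finite E" using finE unfolding E_def .
  have neE: "E \<noteq> {}" using maximizer_ext[of 1] unfolding E_def by auto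
  have "Min ((\<lambda>t. ccw_angle t r) ` E) \<in> (\<lambda>t. ccw_angle t r) ` E" using fE neE by (intro Min_in) auto
  then obtain t1 where t1: "t1 \<in> E" "ccw_angle t1 r = Min ((\<lambda>t. ccw_angle t r) ` E)" by auto
  have t1min: "\<And>t. t \<in> E \<Longrightarrow> ccw_angle t1 r \<le> ccw_angle t r" using t1 fE by simp
  have n1: "t1 \<noteq> 0" using t1 ext_props unfolding E_def by auto
  have ne2: "E - {t1} \<noteq> {}"
  proof
    assume "E - {t1} = {}"
    then have Et: "E = {t1}" using t1 by auto
    have y: "\<i> * t1 \<noteq> 0" using n1 by simp
    obtain s where s: "s \<in> E" "s \<bullet> (\<i> * t1) = omega (\<i> * t1) P"
      using maximizer_ext[OF y] unfolding E_def by blast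
    then show False using Et omega_pos[OF y] inner_rot'[of t1 t1] by simp
  qed
  have "Min ((\<lambda>t. ccw_angle t1 t) ` (E - {t1})) \<in> (\<lambda>t. ccw_angle t1 t) ` (E - {t1})"
    using fE ne2 by (intro Min_in) auto
  then obtain t2 where t2: "t2 \<in> E - {t1}" "ccw_angle t1 t2 = Min ((\<lambda>t. ccw_angle t1 t) ` (E - {t1}))"
    by (metis (no_types, lifting) imageE)
  have t2min: "\<And>t. t \<in> E - {t1} \<Longrightarrow> ccw_angle t1 t2 \<le> ccw_angle t1 t" using t2 fE by simp
  have c: "consecutive P t1 t2" unfolding consecutive_def using t1 t2 t2min unfolding E_def by auto
  have "ccw_angle t1 r \<le> ccw_angle t1 t2"
  proof (rule ccontr)
    assume "\<not> ?thesis"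
    then have "ccw_angle t2 r = ccw_angle t1 r - ccw_angle t1 t2" by (intro ccw_split) auto
    moreover have "ccw_angle t1 t2 > 0" using consec_cross[OF c] cross_pos_iff by auto
    ultimately show False using t1min[of t2] t2 by auto
  qed
  then show ?thesis using c by blast
qed

lemma G_edge_cross: assumes "G_edge P eps a b" shows "cross a b > 0"
proof -
  have g: "a \<noteq> b" "ccw_angle a b < pi" "\<exists>!x. xstar_pair_prop a b x"
    using assms unfolding G_edge_def by auto
  have "cross a b \<noteq> 0" using not_unique_if_cross0 g by blast
  moreover have "cross a b \<ge> 0" using cross_nonneg g by auto
  ultimately show ?thesis by simp
qed

lemma cand_sub: "candidates P eps \<subseteq> P"
  unfolding candidates_def extreme_pts_def by auto

lemma edge_cover:
  assumes g: "G_edge P eps a b" and t: "t \<in> xrange P a b" and x: "x \<noteq> 0"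
    and tx: "t \<bullet> x = omega x P"
  shows "(1 - eps) * omega x P \<le> max (a \<bullet> x) (b \<bullet> x)"
proof -
  define C where "C = cross a b"
  have C: "C > 0" using G_edge_cross[OF g] unfolding C_def .
  have te: "t \<in> extreme_pts P" and tab: "ccw_angle a t \<le> ccw_angle a b"
    using t unfolding xrange_def by auto
  have tn: "t \<noteq> 0" using ext_props te by auto
  define l where "l = cross t b / C"
  define m where "m = cross a t / C"
  have lm: "l \<ge> 0" "m \<ge> 0" using cone[OF G_edge_cross[OF g] tab] C unfolding l_def m_def by auto
  have teq: "t = l *\<^sub>R a + m *\<^sub>R b"
  proof -
    have "C *\<^sub>R t = (C * l) *\<^sub>R a + (C * m) *\<^sub>R b" using cramer[of a b t] C unfolding l_def m_def C_def by simp
    then have "C *\<^sub>R t = C *\<^sub>R (l *\<^sub>R a + m *\<^sub>R b)" by (simp add: scaleR_add_right)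
    then show ?thesis using C by simp
  qed
  have lmpos: "l + m > 0"
  proof (rule ccontr)
    assume "\<not> l + m > 0" then have "l = 0" "m = 0" using lm by auto
    then show False using teq tn by simp
  qed
  have cr: "cross a b \<noteq> 0" using C unfolding C_def by simp
  define xx where "xx = xs a b"
  have h: "a \<bullet> xx > 0" "a \<bullet> xx = b \<bullet> xx" using xs_props[OF cr] unfolding xx_def xstar_pair_prop_def by auto
  have txx: "t \<bullet> xx = (l + m) * (a \<bullet> xx)" using h(2) teq by (simp add: inner_add_left algebra_simps)
  have T: "t \<in> xrange P a b" "finite (xrange P a b)" using t finP unfolding xrange_def extreme_pts_def by auto
  have "1 - (a \<bullet> xx) / (t \<bullet> xx) \<le> lij P a b"
    unfolding lij_def Let_def xs_the(2)[OF cr] xx_def[symmetric] using T by (auto intro!: Max_ge)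
  also have "\<dots> \<le> eps" using g unfolding G_edge_def by auto
  finally have "1 - (a \<bullet> xx) / (t \<bullet> xx) \<le> eps" .
  then have "1 - 1 / (l + m) \<le> eps" using txx h lmpos by simp
  then have lmb: "(1 - eps) * (l + m) \<le> 1" using lmpos by (simp add: field_simps)
  define M where "M = max (a \<bullet> x) (b \<bullet> x)"
  have W: "omega x P = l * (a \<bullet> x) + m * (b \<bullet> x)" using tx teq by (simp add: inner_add_left)
  also have "\<dots> \<le> l * M + m * M" unfolding M_def using lm by (intro add_mono mult_left_mono) auto
  finally have WM: "omega x P \<le> (l + m) * M" by (simp add: algebra_simps)
  have Mpos: "M > 0" using WM omega_pos[OF x] lmpos by (smt (verit) mult_nonneg_nonpos)
  have "(1 - eps) * omega x P \<le> (1 - eps) * ((l + m) * M)" using WM e1 by (intro mult_left_mono) auto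
  also have "\<dots> = ((1 - eps) * (l + m)) * M" by simp
  also have "\<dots> \<le> 1 * M" using lmb Mpos by (intro mult_right_mono) auto
  finally show ?thesis unfolding M_def by simp
qed

lemma cycle_cover:
  assumes c: "dcycle (G_edge P eps) vs" and te: "t \<in> extreme_pts P"
  shows "\<exists>i < length vs. t \<in> xrange P (vs ! i) (vs ! (Suc i mod length vs))"
proof (rule ccontr)
  assume na: "\<not> ?thesis"
  define n where "n = length vs"
  have n2: "n \<ge> 2" and ed: "\<And>i. i < n \<Longrightarrow> G_edge P eps (vs ! i) (vs ! (Suc i mod n))"
    using c unfolding dcycle_def n_def by auto
  have lt: "\<And>i. i < n \<Longrightarrow> ccw_angle (vs ! i) (vs ! (Suc i mod n)) < ccw_angle (vs ! i) t"
    using na te unfolding xrange_def n_def by force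
  define f where "f k = - ccw_angle (vs ! (k mod n)) t" for k
  have step: "f k < f (Suc k)" for k
  proof -
    define j where "j = k mod n"
    have j: "j < n" using n2 unfolding j_def by simp
    have sj: "Suc k mod n = Suc j mod n" unfolding j_def by (simp add: mod_Suc_eq)
    have "ccw_angle (vs ! (Suc j mod n)) t = ccw_angle (vs ! j) t - ccw_angle (vs ! j) (vs ! (Suc j mod n))"
      using lt[OF j] by (intro ccw_split) auto
    moreover have "ccw_angle (vs ! j) (vs ! (Suc j mod n)) > 0"
      using G_edge_cross[OF ed[OF j]] cross_pos_iff by auto
    ultimately show ?thesis unfolding f_def sj j_def[symmetric] by simp
  qed
  have "f 0 < f n" using lift_Suc_mono_less[of f 0 n, OF step] n2 by simp
  then show False unfolding f_def by simp
qed

lemma part1: assumes c: "dcycle (G_edge P eps) vs" shows "eps_regret_set P eps (set vs)"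
proof -
  have n2: "length vs \<ge> 2" and ed: "\<And>i. i < length vs \<Longrightarrow> G_edge P eps (vs ! i) (vs ! (Suc i mod length vs))"
    using c unfolding dcycle_def by auto
  have sub: "set vs \<subseteq> P"
  proof
    fix v assume "v \<in> set vs"
    then obtain i where i: "i < length vs" "v = vs ! i" by (auto simp: in_set_conv_nth)
    then show "v \<in> P" using ed[OF i(1)] cand_sub unfolding G_edge_def by auto
  qed
  have ne: "set vs \<noteq> {}" using n2 by auto
  have "regret_ratio x (set vs) P \<le> eps" if x: "norm x = 1" for x
  proof -
    have x0: "x \<noteq> 0" using x by auto
    obtain t where t: "t \<in> extreme_pts P" "t \<bullet> x = omega x P" using maximizer_ext[OF x0] by blast
    obtain i where i: "i < length vs" "t \<in> xrange P (vs ! i) (vs ! (Suc i mod length vs))"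
      using cycle_cover[OF c t(1)] by blast
    have "(1 - eps) * omega x P \<le> max (vs ! i \<bullet> x) (vs ! (Suc i mod length vs) \<bullet> x)"
      using edge_cover[OF ed[OF i(1)] i(2) x0 t(2)] .
    also have "\<dots> \<le> omega x (set vs)"
      using i(1) n2 by (auto intro!: omega_ge nth_mem mod_less_divisor)
    finally show ?thesis using regret_le_iff omega_pos[OF x0] by auto
  qed
  then show ?thesis unfolding eps_regret_set_def using sub ne by auto
qed

end


lemma nb_mid: "Arg a < Arg b \<Longrightarrow> Arg q \<le> Arg a \<or> Arg b \<le> Arg q \<Longrightarrow>
  \<not> (0 < ccw_angle a q \<and> ccw_angle a q < ccw_angle a b)"
  using Arg_bounded[of a] Arg_bounded[of b] Arg_bounded[of q] unfolding ccw_angle_def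
  by (auto split: if_splits)

lemma nb_wrap: "Arg b < Arg a \<Longrightarrow> Arg b \<le> Arg q \<Longrightarrow> Arg q \<le> Arg a \<Longrightarrow>
  \<not> (0 < ccw_angle a q \<and> ccw_angle a q < ccw_angle a b)"
  using Arg_bounded[of a] Arg_bounded[of b] Arg_bounded[of q] unfolding ccw_angle_def
  by (auto split: if_splits)

context setting begin

lemma reg_basic: assumes "eps_regret_set P eps Q" shows "finite Q" "Q \<noteq> {}" "Q \<subseteq> P"
  using assms finP unfolding eps_regret_set_def by (auto intro: finite_subset)

lemma reg_ineq:
  assumes r: "eps_regret_set P eps Q" and x: "x \<noteq> 0"
  shows "(1 - eps) * omega x P \<le> omega x Q"
proof -
  have x': "x = norm x *\<^sub>R sgn x" using x by (simp add: sgn_div_norm)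
  have ns: "norm (sgn x) = 1" using x by (simp add: norm_sgn)
  have "regret_ratio (sgn x) Q P \<le> eps" using r ns unfolding eps_regret_set_def by auto
  then have "(1 - eps) * omega (sgn x) P \<le> omega (sgn x) Q"
    using regret_le_iff posP ns by auto
  then have "norm x * ((1 - eps) * omega (sgn x) P) \<le> norm x * omega (sgn x) Q"
    by (intro mult_left_mono) auto
  moreover have "omega x P = norm x * omega (sgn x) P"
    using omega_scale[OF finP neP, of "norm x" "sgn x"] x' by simp
  moreover have "omega x Q = norm x * omega (sgn x) Q"
    using omega_scale[OF reg_basic(1,2)[OF r], of "norm x" "sgn x"] x' by simp
  ultimately show ?thesis by (simp add: algebra_simps)
qed

lemma reg_pos:
  assumes r: "eps_regret_set P eps Q" and x: "x \<noteq> 0"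
  shows "\<exists>q\<in>Q. q \<bullet> x > 0"
proof -
  have "omega x Q > 0" using reg_ineq[OF r x] omega_pos[OF x] e1
    by (smt (verit) mult_pos_pos)
  then show ?thesis using omega_in[OF reg_basic(1,2)[OF r], of x] by auto
qed

lemma redundant:
  assumes r: "eps_regret_set P eps Q" and v: "v \<in> Q" and p: "p \<in> Q" "p \<noteq> v"
    and w: "w \<in> Q" "w \<noteq> v" and c: "c1 \<ge> 0" "c2 \<ge> 0" "c1 + c2 \<le> 1"
    and veq: "v = c1 *\<^sub>R p + c2 *\<^sub>R w"
  shows "eps_regret_set P eps (Q - {v})"
proof -
  have fQ: "finite Q" and sub: "Q \<subseteq> P" using reg_basic[OF r] by auto
  have fQ': "finite (Q - {v})" using fQ by auto
  have "regret_ratio x (Q - {v}) P \<le> eps" if x: "norm x = 1" for x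
  proof -
    have x0: "x \<noteq> 0" using x by auto
    have W: "(1 - eps) * omega x P \<le> omega x Q" using reg_ineq[OF r x0] .
    have Wp: "(1 - eps) * omega x P > 0" using omega_pos[OF x0] e1 by simp
    obtain q where q: "q \<in> Q" "omega x Q = q \<bullet> x" using omega_in[OF reg_basic(1,2)[OF r]] by blast
    have "omega x Q \<le> omega x (Q - {v})"
    proof (cases "q = v")
      case False
      then show ?thesis using q omega_ge[OF fQ', of q x] by auto
    next
      case True
      define M where "M = max (p \<bullet> x) (w \<bullet> x)"
      have M: "M \<le> omega x (Q - {v})" unfolding M_def using p w omega_ge[OF fQ'] by auto
      have vx: "v \<bullet> x = c1 * (p \<bullet> x) + c2 * (w \<bullet> x)" using veq by (simp add: inner_add_left)
      also have "\<dots> \<le> c1 * M + c2 * M" unfolding M_def using c by (intro add_mono mult_left_mono) auto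
      finally have vM: "v \<bullet> x \<le> (c1 + c2) * M" by (simp add: algebra_simps)
      have "v \<bullet> x > 0" using True q W Wp by simp
      then have "M > 0" using vM c by (smt (verit) mult_nonneg_nonpos)
      then have "(c1 + c2) * M \<le> M" using c by (simp add: mult_le_cancel_right1)
      then show ?thesis using vM M True q by simp
    qed
    then show ?thesis using W regret_le_iff omega_pos[OF x0] by auto
  qed
  moreover have "Q - {v} \<noteq> {}" using p by auto
  ultimately show ?thesis unfolding eps_regret_set_def using sub by auto
qed

end

locale locmin = setting +
  fixes Q assumes lm: "loc_min_eps_regret_set P eps Q"
begin

lemma Qreg: "eps_regret_set P eps Q" using lm unfolding loc_min_eps_regret_set_def by auto
lemma finQ: "finite Q" and neQ: "Q \<noteq> {}" and subQ: "Q \<subseteq> P" using reg_basic[OF Qreg] by auto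

lemma no_red:
  assumes "v \<in> Q" "p \<in> Q" "p \<noteq> v" "w \<in> Q" "w \<noteq> v" "c1 \<ge> 0" "c2 \<ge> 0" "c1 + c2 \<le> 1"
    "v = c1 *\<^sub>R p + c2 *\<^sub>R w"
  shows False
  using redundant[OF Qreg assms] lm assms(1) unfolding loc_min_eps_regret_set_def by auto

lemma zero_notin: "0 \<notin> Q"
proof
  assume z: "0 \<in> Q"
  obtain q where q: "q \<in> Q" "q \<bullet> 1 > 0" using reg_pos[OF Qreg, of 1] by auto
  then have "q \<noteq> 0" by auto
  then show False using no_red[of 0 q q 0 0] z q by auto
qed

lemma Arg_injQ: assumes "p \<in> Q" "q \<in> Q" "Arg p = Arg q" shows "p = q"
proof -
  have n: "p \<noteq> 0" "q \<noteq> 0" using zero_notin assms by auto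
  define k where "k = cmod q / cmod p"
  have k: "q = k *\<^sub>R p" "k > 0" using same_Arg[OF n(1) assms(3)] n unfolding k_def by auto
  consider "k < 1" | "k = 1" | "k > 1" by linarith
  then show ?thesis
  proof cases
    case 1 then show ?thesis using no_red[of q p p k 0] assms k by force
  next
    case 2 then show ?thesis using k by simp
  next
    case 3
    have "p = (1/k) *\<^sub>R q" using k by simp
    then show ?thesis using no_red[of p q q "1/k" 0] assms k 3 by force
  qed
qed

lemma not_single: "q \<in> Q \<Longrightarrow> Q - {q} \<noteq> {}"
proof
  assume q: "q \<in> Q" "Q - {q} = {}"
  then have Qq: "Q = {q}" by auto
  have "q \<noteq> 0" using zero_notin q by auto
  then have y: "\<i> * q \<noteq> 0" by simp
  then show False using reg_pos[OF Qreg y] Qq inner_rot'[of q q] by simp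
qed

lemma cand: assumes q: "q \<in> Q" shows "q \<in> candidates P eps"
proof (cases "q \<in> extreme_pts P")
  case True then show ?thesis unfolding candidates_def by auto
next
  case False
  have ne: "Q - {q} \<noteq> {}" using not_single[OF q] .
  have nr: "\<not> eps_regret_set P eps (Q - {q})" using lm q unfolding loc_min_eps_regret_set_def by auto
  then obtain x where x: "norm x = 1" "\<not> regret_ratio x (Q - {q}) P \<le> eps"
    using ne subQ unfolding eps_regret_set_def by auto
  have x0: "x \<noteq> 0" using x by auto
  have fQ': "finite (Q - {q})" using finQ by auto
  have lt: "omega x (Q - {q}) < (1 - eps) * omega x P" using x regret_le_iff omega_pos[OF x0] by auto
  have W: "(1 - eps) * omega x P \<le> omega x Q" using reg_ineq[OF Qreg x0] .
  obtain q' where q': "q' \<in> Q" "omega x Q = q' \<bullet> x" using omega_in[OF finQ neQ] by blast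
  have qx: "(1 - eps) * omega x P \<le> q \<bullet> x"
  proof (cases "q' = q")
    case True then show ?thesis using W q' by simp
  next
    case False then have "q' \<bullet> x \<le> omega x (Q - {q})" using q' omega_ge[OF fQ'] by auto
    then show ?thesis using W q' lt by simp
  qed
  obtain t1 t2 where t: "consecutive P t1 t2" "ccw_angle t1 q \<le> ccw_angle t1 t2" using ext_cover by blast
  have C: "cross t1 t2 > 0" using consec_cross[OF t(1)] .
  have te: "t1 \<in> P" "t2 \<in> P" using t(1) ext_props unfolding consecutive_def by auto
  define l where "l = cross q t2 / cross t1 t2"
  define m where "m = cross t1 q / cross t1 t2"
  have lm: "l \<ge> 0" "m \<ge> 0" using cone[OF C t(2)] C unfolding l_def m_def by auto
  have qeq: "q = l *\<^sub>R t1 + m *\<^sub>R t2"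
  proof -
    have "cross t1 t2 *\<^sub>R q = (cross t1 t2 * l) *\<^sub>R t1 + (cross t1 t2 * m) *\<^sub>R t2"
      using cramer[of t1 t2 q] C unfolding l_def m_def by simp
    then have "cross t1 t2 *\<^sub>R q = cross t1 t2 *\<^sub>R (l *\<^sub>R t1 + m *\<^sub>R t2)" by (simp add: scaleR_add_right)
    then show ?thesis using C by simp
  qed
  have cr: "cross t1 t2 \<noteq> 0" using C by simp
  define n where "n = xstar_ext t1 t2"
  have h: "t1 \<bullet> n > 0" "t1 \<bullet> n = t2 \<bullet> n"
    using xs_props[OF cr] xs_the(3)[OF cr] unfolding n_def xstar_pair_prop_def by auto
  have qn: "q \<bullet> n = (l + m) * (t1 \<bullet> n)" using qeq h(2) by (simp add: inner_add_left algebra_simps)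
  have "(1 - eps) * (t1 \<bullet> n) \<le> q \<bullet> n"
  proof (rule ccontr)
    assume "\<not> ?thesis"
    then have "(l + m) * (t1 \<bullet> n) < (1 - eps) * (t1 \<bullet> n)" using qn by simp
    then have lmb: "l + m < 1 - eps" using h(1) by (simp add: mult_less_cancel_right)
    have "q \<bullet> x = l * (t1 \<bullet> x) + m * (t2 \<bullet> x)" using qeq by (simp add: inner_add_left)
    also have "\<dots> \<le> l * omega x P + m * omega x P"
      using lm te by (intro add_mono mult_left_mono omega_ge[OF finP]) auto
    also have "\<dots> = (l + m) * omega x P" by (simp add: algebra_simps)
    also have "\<dots> < (1 - eps) * omega x P" using lmb omega_pos[OF x0] by (simp add: mult_strict_right_mono)
    finally show False using qx by simp
  qed
  then show ?thesis using False q subQ t(1) unfolding candidates_def n_def by blast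
qed

lemma edge:
  assumes a: "a \<in> Q" and b: "b \<in> Q" and ab: "a \<noteq> b"
    and nb: "\<forall>q\<in>Q. \<not> (0 < ccw_angle a q \<and> ccw_angle a q < ccw_angle a b)"
  shows "G_edge P eps a b"
proof -
  have n: "a \<noteq> 0" "b \<noteq> 0" using zero_notin a b by auto
  have "Arg a \<noteq> Arg b" using Arg_injQ a b ab by blast
  then have pos: "ccw_angle a b > 0" using ccw_zero_iff ccw_range by (metis order_le_less)
  have lpi: "ccw_angle a b < pi"
  proof (rule ccontr)
    assume npi: "\<not> ccw_angle a b < pi"
    have y: "\<i> * a \<noteq> 0" using n by simp
    obtain q where q: "q \<in> Q" "q \<bullet> (\<i> * a) > 0" using reg_pos[OF Qreg y] by blast
    have "cross a q \<le> 0" using nb q(1) npi ccw_range[of a q] by (intro cross_nonpos) force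
    then show False using q inner_rot'[of q a] by simp
  qed
  have C: "cross a b > 0" using cross_pos_iff n pos lpi by simp
  have cr: "cross a b \<noteq> 0" using C by simp
  define xx where "xx = xs a b"
  have h: "a \<bullet> xx > 0" "a \<bullet> xx = b \<bullet> xx" "norm xx = 1"
    using xs_props[OF cr] unfolding xx_def xstar_pair_prop_def by auto
  have key: "q \<bullet> xx \<le> a \<bullet> xx" if q: "q \<in> Q" for q
  proof (rule ccontr)
    assume big: "\<not> q \<bullet> xx \<le> a \<bullet> xx"
    define al where "al = cross q b / cross a b"
    define be where "be = cross a q / cross a b"
    have qeq: "q = al *\<^sub>R a + be *\<^sub>R b"
    proof -
      have "cross a b *\<^sub>R q = (cross a b * al) *\<^sub>R a + (cross a b * be) *\<^sub>R b"
        using cramer[of a b q] C unfolding al_def be_def by simp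
      then have "cross a b *\<^sub>R q = cross a b *\<^sub>R (al *\<^sub>R a + be *\<^sub>R b)" by (simp add: scaleR_add_right)
      then show ?thesis using C by simp
    qed
    have qxx: "q \<bullet> xx = (al + be) * (a \<bullet> xx)" using qeq h(2) by (simp add: inner_add_left algebra_simps)
    have "1 * (a \<bullet> xx) < (al + be) * (a \<bullet> xx)" using big qxx by simp
    then have s1: "al + be > 1" using h(1) mult_less_cancel_right[of 1 "a \<bullet> xx" "al + be"] by auto
    have qa: "q \<noteq> a" "q \<noteq> b" using big h(2) by auto
    consider "al < 0" | "be < 0" | "al = 0" "be \<ge> 0" | "be = 0" "al \<ge> 0" | "al > 0" "be > 0" by linarith
    then show False
    proof cases
      case 1
      have bpos: "be > 0" using s1 1 by linarith
      have "b = (1 / be) *\<^sub>R q + (- al / be) *\<^sub>R a"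
        using qeq bpos by (simp add: scaleR_add_right algebra_simps divide_inverse)
      moreover have "1 / be + (- al / be) \<le> 1" using bpos s1 by (simp add: field_simps)
      moreover have "- al / be \<ge> 0" "1 / be \<ge> 0" using 1 bpos by (auto simp: divide_nonpos_pos)
      ultimately show False using no_red[OF b q qa(2) a ab] by blast
    next
      case 2
      have apos: "al > 0" using s1 2 by linarith
      have "a = (1 / al) *\<^sub>R q + (- be / al) *\<^sub>R b"
        using qeq apos by (simp add: scaleR_add_right algebra_simps divide_inverse)
      moreover have "1 / al + (- be / al) \<le> 1" using apos s1 by (simp add: field_simps)
      moreover have "- be / al \<ge> 0" "1 / al \<ge> 0" using 2 apos by (auto simp: divide_nonpos_pos)
      ultimately show False using no_red[OF a q qa(1) b ab[symmetric]] by blast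
    next
      case 3
      have bpos: "be > 1" using s1 3 by linarith
      have "b = (1 / be) *\<^sub>R q + 0 *\<^sub>R q" using qeq 3 bpos by simp
      then show False using no_red[of b q q "1/be" 0] b q qa bpos by auto
    next
      case 4
      have apos: "al > 1" using s1 4 by linarith
      have "a = (1 / al) *\<^sub>R q + 0 *\<^sub>R q" using qeq 4 apos by simp
      then show False using no_red[of a q q "1/al" 0] a q qa apos by auto
    next
      case 5
      have c1: "cross a q > 0" using 5 C unfolding be_def by (simp add: divide_pos_pos zero_less_divide_iff)
      have c2: "cross q b > 0" using 5 C unfolding al_def by (simp add: zero_less_divide_iff)
      have r1: "0 < ccw_angle a q" "ccw_angle a q < pi" using cross_pos_iff c1 by auto
      have r2: "0 < ccw_angle q b" "ccw_angle q b < pi" using cross_pos_iff c2 by auto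
      have "ccw_angle a q + ccw_angle q b = ccw_angle a b"
        using ccw_sum[of a q b] r1 r2 lpi pos by auto
      then have "ccw_angle a q < ccw_angle a b" using r2 by linarith
      then show False using nb q r1 by auto
    qed
  qed
  have oQ: "omega xx Q \<le> a \<bullet> xx" using key by (intro omega_le[OF finQ neQ])
  have xx0: "xx \<noteq> 0" using h(3) by auto
  have lij: "lij P a b \<le> eps"
  proof -
    define T where "T = xrange P a b"
    have fT: "finite T" using finP unfolding T_def xrange_def extreme_pts_def by auto
    have el: "1 - (a \<bullet> xx) / (t \<bullet> xx) \<le> eps" if t: "t \<in> T" for t
    proof -
      have te: "t \<in> extreme_pts P" and tab: "ccw_angle a t \<le> ccw_angle a b"
        using t unfolding T_def xrange_def by auto
      have tP: "t \<in> P" and tn: "t \<noteq> 0" using ext_props te by auto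
      define l where "l = cross t b / cross a b"
      define m where "m = cross a t / cross a b"
      have lm: "l \<ge> 0" "m \<ge> 0" using cone[OF C tab] C unfolding l_def m_def by auto
      have teq: "t = l *\<^sub>R a + m *\<^sub>R b"
      proof -
        have "cross a b *\<^sub>R t = (cross a b * l) *\<^sub>R a + (cross a b * m) *\<^sub>R b"
          using cramer[of a b t] C unfolding l_def m_def by simp
        then have "cross a b *\<^sub>R t = cross a b *\<^sub>R (l *\<^sub>R a + m *\<^sub>R b)" by (simp add: scaleR_add_right)
        then show ?thesis using C by simp
      qed
      have lmpos: "l + m > 0"
      proof (rule ccontr)
        assume "\<not> l + m > 0" then have "l = 0" "m = 0" using lm by auto
        then show False using teq tn by simp
      qed
      have txx: "t \<bullet> xx = (l + m) * (a \<bullet> xx)" using h(2) teq by (simp add: inner_add_left algebra_simps)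
      have tpos: "t \<bullet> xx > 0" using txx lmpos h(1) by simp
      have "(1 - eps) * (t \<bullet> xx) \<le> (1 - eps) * omega xx P"
        using omega_ge[OF finP tP] e1 by (intro mult_left_mono) auto
      also have "\<dots> \<le> omega xx Q" using reg_ineq[OF Qreg xx0] .
      also have "\<dots> \<le> a \<bullet> xx" using oQ .
      finally show ?thesis using tpos by (simp add: field_simps)
    qed
    show ?thesis
    proof (cases "T = {}")
      case True then show ?thesis unfolding lij_def Let_def T_def[symmetric] using e0 by simp
    next
      case False
      show ?thesis unfolding lij_def Let_def T_def[symmetric] xs_the(2)[OF cr] xx_def[symmetric]
        using False fT el by (auto intro!: Max.boundedI)
    qed
  qed
  show ?thesis unfolding G_edge_def using cand a b ab lpi xs_the(1)[OF cr] lij by auto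
qed

end


context locmin begin

lemma part2: "\<exists>vs. dcycle (G_edge P eps) vs \<and> set vs = Q"
proof -
  define A where "A = Arg ` Q"
  have fA: "finite A" using finQ unfolding A_def by auto
  obtain L where L: "sorted_wrt (<) L" "set L = A"
    using ex1_sorted_list_for_set_if_finite[OF fA] by blast
  have dL: "distinct L" and sL: "sorted L" using L(1) strict_sorted_iff by auto
  have inj: "inj_on Arg Q" using Arg_injQ by (auto intro: inj_onI)
  define f where "f = inv_into Q Arg"
  define vs where "vs = map f L"
  define n where "n = length L"
  have fQ: "\<And>s. s \<in> A \<Longrightarrow> f s \<in> Q" unfolding f_def A_def by (auto intro: inv_into_into)
  have Af: "\<And>s. s \<in> A \<Longrightarrow> Arg (f s) = s" unfolding f_def A_def by (auto intro: f_inv_into_f)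
  have fA': "\<And>q. q \<in> Q \<Longrightarrow> f (Arg q) = q" unfolding f_def using inj by simp
  have injf: "inj_on f A" unfolding f_def A_def by (rule inj_on_inv_into) simp
  have len: "length vs = n" unfolding vs_def n_def by simp
  have nA: "n = card A" unfolding n_def using distinct_card[OF dL] L(2) by simp
  have cA: "card A = card Q" unfolding A_def using card_image[OF inj] .
  obtain q0 where q0: "q0 \<in> Q" using neQ by auto
  have "card (Q - {q0}) > 0" using not_single[OF q0] finQ by (simp add: card_gt_0_iff)
  then have n2: "n \<ge> 2" using nA cA card_Diff_singleton[OF q0] finQ
    by linarith
  have setvs: "set vs = Q"
  proof -
    have "set vs = f ` A" unfolding vs_def using L(2) by simp
    also have "\<dots> = Q" unfolding A_def using fA' by (force simp: image_comp)
    finally show ?thesis .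
  qed
  have dvs: "distinct vs" unfolding vs_def using dL injf L(2) by (simp add: distinct_map)
  have sorted_le: "\<And>k i. k \<le> i \<Longrightarrow> i < n \<Longrightarrow> L ! k \<le> L ! i"
    using sL unfolding n_def by (simp add: sorted_nth_mono)
  have sorted_lt: "\<And>k i. k < i \<Longrightarrow> i < n \<Longrightarrow> L ! k < L ! i"
    using L(1) unfolding n_def by (simp add: sorted_wrt_nth_less)
  have edges: "G_edge P eps (vs ! i) (vs ! (Suc i mod length vs))" if i: "i < length vs" for i
  proof -
    define j where "j = Suc i mod n"
    have j: "j < n" using n2 unfolding j_def by simp
    have LA: "\<And>k. k < n \<Longrightarrow> L ! k \<in> A" using L(2) unfolding n_def by auto
    have i': "i < n" using i len by simp
    define a where "a = vs ! i"
    define b where "b = vs ! j"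
    have a: "a = f (L ! i)" "a \<in> Q" "Arg a = L ! i"
      unfolding a_def vs_def using i' LA[OF i'] fQ Af n_def by auto
    have b: "b = f (L ! j)" "b \<in> Q" "Arg b = L ! j"
      unfolding b_def vs_def using j LA[OF j] fQ Af n_def by auto
    have ij: "i \<noteq> j"
    proof (cases "Suc i < n")
      case True then show ?thesis unfolding j_def by simp
    next
      case False then have "Suc i = n" using i' by simp
      then show ?thesis unfolding j_def using n2 by auto
    qed
    have ab: "a \<noteq> b" unfolding a_def b_def using dvs ij i' j len by (simp add: nth_eq_iff_index_eq)
    have nb: "\<forall>q\<in>Q. \<not> (0 < ccw_angle a q \<and> ccw_angle a q < ccw_angle a b)"
    proof
      fix q assume q: "q \<in> Q"
      then have "Arg q \<in> set L" using L(2) unfolding A_def by auto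
      then obtain k where k: "k < n" "L ! k = Arg q" unfolding n_def by (auto simp: in_set_conv_nth)
      show "\<not> (0 < ccw_angle a q \<and> ccw_angle a q < ccw_angle a b)"
      proof (cases "Suc i < n")
        case True
        then have jj: "j = Suc i" unfolding j_def by simp
        have "Arg a < Arg b" using a b jj sorted_lt True by simp
        moreover have "Arg q \<le> Arg a \<or> Arg b \<le> Arg q"
        proof (cases "k \<le> i")
          case True then show ?thesis using sorted_le[OF True i'] k a by simp
        next
          case False then have "Suc i \<le> k" by simp
          then show ?thesis using sorted_le[OF _ k(1)] k b jj by simp
        qed
        ultimately show ?thesis by (rule nb_mid)
      next
        case False
        then have "Suc i = n" using i' by simp
        then have jj: "j = 0" unfolding j_def by simp
        have ipos: "0 < i" using \<open>Suc i = n\<close> n2 by simp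
        have "Arg b < Arg a" using a b jj sorted_lt[OF ipos i'] by simp
        moreover have "Arg b \<le> Arg q" using sorted_le[of 0 k] k b jj by simp
        moreover have "Arg q \<le> Arg a" using sorted_le[of k i] k a i' \<open>Suc i = n\<close> by simp
        ultimately show ?thesis by (rule nb_wrap)
      qed
    qed
    have "G_edge P eps a b" using edge[OF a(2) b(2) ab nb] .
    then show ?thesis unfolding a_def b_def j_def using len by simp
  qed
  have "dcycle (G_edge P eps) vs" unfolding dcycle_def using len n2 dvs edges by auto
  then show ?thesis using setvs by blast
qed

end

theorem lemma3:
  fixes P :: "complex set" and eps :: real
  assumes "finite P" and "P \<noteq> {}"
    and "\<forall>x. norm x = 1 \<longrightarrow> omega x P > 0"
    and "0 < eps" and "eps < 1"
  shows "(\<forall>vs. dcycle (G_edge P eps) vs \<longrightarrow> eps_regret_set P eps (set vs)) \<and>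
         (\<forall>Q. loc_min_eps_regret_set P eps Q \<longrightarrow>
              (\<exists>vs. dcycle (G_edge P eps) vs \<and> set vs = Q))"
proof -
  interpret setting P eps using assms by unfold_locales auto
  have 1: "\<forall>vs. dcycle (G_edge P eps) vs \<longrightarrow> eps_regret_set P eps (set vs)"
    using part1 by blast
  have 2: "\<exists>vs. dcycle (G_edge P eps) vs \<and> set vs = Q" if "loc_min_eps_regret_set P eps Q" for Q
  proof -
    interpret locmin P eps Q using that by unfold_locales
    show ?thesis using part2 .
  qed
  show ?thesis using 1 2 by blast
qed


end
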